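(* Let $H$ and $G$ be groups. The relation $\approx_2$ is an equivalence relation on $\mathrm{Crossed}(H,G)$; two normalized crossed systems $(\alpha,f)$, $(\alpha',f')$ satisfy $(\alpha,f)\approx_2(\alpha',f')$ if and only if they are isomorphic objects of $\mathcal{E}_2(H,G)$. Consequently there is a bijection between the set of objects of a skeleton of $\mathcal{E}_2(H,G)$ (i.e. the set of isomorphism classes of objects of $\mathcal{E}_2(H,G)$) and the quotient set $\mathrm{Crossed}(H,G)/\!\approx_2$.
   Context: For groups $H,G$ and a map $\alpha:G\to\mathrm{Aut}(H)$ write $g\triangleright h:=\alpha(g)(h)$ (and $g\triangleright' h:=\alpha'(g)(h)$). A normalized crossed system is a quadruple $(H,G,\alpha,f)$ with maps $\alpha:G\to\mathrm{Aut}(H)$, $f:G\times G\to H$, $f(1,1)=1$, such that for all $g_1,g_2,g_3\in G$, $h\in H$: (WA) $g_1\triangleright(g_2\triangleright h)=f(g_1,g_2)\big((g_1g_2)\triangleright h\big)f(g_1,g_2)^{-1}$ and (CC) $f(g_1,g_2)f(g_1g_2,g_3)=\big(g_1\triangleright f(g_2,g_3)\big)f(g_1,g_2g_3)$. $\mathrm{Crossed}(H,G)$ denotes the set of pairs $(\alpha,f)$ such that $(H,G,\alpha,f)$ is a normalized crossed system. The crossed product $H\#_\alpha^f G$ is the group on the set $H\times G$ with multiplication $(h_1,g_1)\cdot(h_2,g_2)=\big(h_1(g_1\triangleright h_2)f(g_1,g_2),g_1g_2\big)$ and unit $(1,1)$; let $i_H(h)=(h,1)$, $\pi_G(h,g)=g$.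 The category $\mathcal{E}_2(H,G)$ has object set $\mathrm{Crossed}(H,G)$, and a morphism $(\alpha,f)\to(\alpha',f')$ is a triple $(\eta,\psi,\gamma)$ of group homomorphisms $\eta:H\to H$, $\psi:H\#_\alpha^f G\to H\#_{\alpha'}^{f'}G$, $\gamma:G\to G$ with $\psi\circ i_H=i'_H\circ\eta$ and $\pi'_G\circ\psi=\gamma\circ\pi_G$; composition is componentwise. Define $(\alpha,f)\approx_2(\alpha',f')$ if there exist group isomorphisms $\eta:H\to H$, $\gamma:G\to G$ and a map $t:G\to H$ such that for all $h\in H$, $g,g_1,g_2\in G$: $g\triangleright' h=\eta\big(t(g)(\gamma^{-1}(g)\triangleright\eta^{-1}(h))t(g)^{-1}\big)$ and $f'(g_1,g_2)=\eta\big(t(g_1)(\gamma^{-1}(g_1)\triangleright t(g_2))f(\gamma^{-1}(g_1),\gamma^{-1}(g_2))t(g_1g_2)^{-1}\big)$. *)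

theory Defs
  imports "HOL-Algebra.Bij"
begin

definition Crossed :: "'h monoid \<Rightarrow> 'g monoid \<Rightarrow> (('g \<Rightarrow> 'h \<Rightarrow> 'h) \<times> ('g \<times> 'g \<Rightarrow> 'h)) set" where
  "Crossed H G = {(\<alpha>, f).
     \<alpha> \<in> carrier G \<rightarrow>\<^sub>E auto H \<and>
     f \<in> carrier G \<times> carrier G \<rightarrow>\<^sub>E carrier H \<and>
     f (\<one>\<^bsub>G\<^esub>, \<one>\<^bsub>G\<^esub>) = \<one>\<^bsub>H\<^esub> \<and>
     (\<forall>g1\<in>carrier G. \<forall>g2\<in>carrier G. \<forall>h\<in>carrier H.
        \<alpha> g1 (\<alpha> g2 h) = f (g1, g2) \<otimes>\<^bsub>H\<^esub> \<alpha> (g1 \<otimes>\<^bsub>G\<^esub> g2) h \<otimes>\<^bsub>H\<^esub> inv\<^bsub>H\<^esub> f (g1, g2)) \<and>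
     (\<forall>g1\<in>carrier G. \<forall>g2\<in>carrier G. \<forall>g3\<in>carrier G.
        f (g1, g2) \<otimes>\<^bsub>H\<^esub> f (g1 \<otimes>\<^bsub>G\<^esub> g2, g3) = \<alpha> g1 (f (g2, g3)) \<otimes>\<^bsub>H\<^esub> f (g1, g2 \<otimes>\<^bsub>G\<^esub> g3))}"

definition crossed_product :: "'h monoid \<Rightarrow> 'g monoid \<Rightarrow> ('g \<Rightarrow> 'h \<Rightarrow> 'h) \<Rightarrow> ('g \<times> 'g \<Rightarrow> 'h) \<Rightarrow> ('h \<times> 'g) monoid" where
  "crossed_product H G \<alpha> f =
     \<lparr>carrier = carrier H \<times> carrier G,
      mult = (\<lambda>(h1, g1) (h2, g2). (h1 \<otimes>\<^bsub>H\<^esub> \<alpha> g1 h2 \<otimes>\<^bsub>H\<^esub> f (g1, g2), g1 \<otimes>\<^bsub>G\<^esub> g2)),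
      one = (\<one>\<^bsub>H\<^esub>, \<one>\<^bsub>G\<^esub>)\<rparr>"

definition E2_mor :: "'h monoid \<Rightarrow> 'g monoid \<Rightarrow> ('g \<Rightarrow> 'h \<Rightarrow> 'h) \<times> ('g \<times> 'g \<Rightarrow> 'h)
     \<Rightarrow> ('g \<Rightarrow> 'h \<Rightarrow> 'h) \<times> ('g \<times> 'g \<Rightarrow> 'h)
     \<Rightarrow> ('h \<Rightarrow> 'h) \<Rightarrow> ('h \<times> 'g \<Rightarrow> 'h \<times> 'g) \<Rightarrow> ('g \<Rightarrow> 'g) \<Rightarrow> bool" where
  "E2_mor H G x y \<eta> \<psi> \<gamma> \<longleftrightarrow>
     \<eta> \<in> hom H H \<and>
     \<psi> \<in> hom (crossed_product H G (fst x) (snd x)) (crossed_product H G (fst y) (snd y)) \<and>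
     \<gamma> \<in> hom G G \<and>
     (\<forall>h\<in>carrier H. \<psi> (h, \<one>\<^bsub>G\<^esub>) = (\<eta> h, \<one>\<^bsub>G\<^esub>)) \<and>
     (\<forall>h\<in>carrier H. \<forall>g\<in>carrier G. snd (\<psi> (h, g)) = \<gamma> g)"

definition E2_isomorphic :: "'h monoid \<Rightarrow> 'g monoid \<Rightarrow> ('g \<Rightarrow> 'h \<Rightarrow> 'h) \<times> ('g \<times> 'g \<Rightarrow> 'h)
     \<Rightarrow> ('g \<Rightarrow> 'h \<Rightarrow> 'h) \<times> ('g \<times> 'g \<Rightarrow> 'h) \<Rightarrow> bool" where
  "E2_isomorphic H G x y \<longleftrightarrow>
     (\<exists>\<eta> \<psi> \<gamma> \<eta>' \<psi>' \<gamma>'. E2_mor H G x y \<eta> \<psi> \<gamma> \<and> E2_mor H G y x \<eta>' \<psi>' \<gamma>' \<and>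
        (\<forall>h\<in>carrier H. \<eta>' (\<eta> h) = h \<and> \<eta> (\<eta>' h) = h) \<and>
        (\<forall>g\<in>carrier G. \<gamma>' (\<gamma> g) = g \<and> \<gamma> (\<gamma>' g) = g) \<and>
        (\<forall>p\<in>carrier H \<times> carrier G. \<psi>' (\<psi> p) = p \<and> \<psi> (\<psi>' p) = p))"

definition approx2 :: "'h monoid \<Rightarrow> 'g monoid \<Rightarrow> ('g \<Rightarrow> 'h \<Rightarrow> 'h) \<times> ('g \<times> 'g \<Rightarrow> 'h)
     \<Rightarrow> ('g \<Rightarrow> 'h \<Rightarrow> 'h) \<times> ('g \<times> 'g \<Rightarrow> 'h) \<Rightarrow> bool" where
  "approx2 H G x y \<longleftrightarrow>
     (case x of (\<alpha>, f) \<Rightarrow> case y of (\<alpha>', f') \<Rightarrow>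
       (\<exists>\<eta> \<gamma> t. \<eta> \<in> iso H H \<and> \<gamma> \<in> iso G G \<and> t \<in> carrier G \<rightarrow> carrier H \<and>
          (\<forall>g\<in>carrier G. \<forall>h\<in>carrier H.
             \<alpha>' g h = \<eta> (t g \<otimes>\<^bsub>H\<^esub> \<alpha> (inv_into (carrier G) \<gamma> g) (inv_into (carrier H) \<eta> h)
                          \<otimes>\<^bsub>H\<^esub> inv\<^bsub>H\<^esub> t g)) \<and>
          (\<forall>g1\<in>carrier G. \<forall>g2\<in>carrier G.
             f' (g1, g2) = \<eta> (t g1 \<otimes>\<^bsub>H\<^esub> \<alpha> (inv_into (carrier G) \<gamma> g1) (t g2)
                 \<otimes>\<^bsub>H\<^esub> f (inv_into (carrier G) \<gamma> g1, inv_into (carrier G) \<gamma> g2)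
                 \<otimes>\<^bsub>H\<^esub> inv\<^bsub>H\<^esub> t (g1 \<otimes>\<^bsub>G\<^esub> g2)))))"

definition approx2_rel where
  "approx2_rel H G = {(x, y). x \<in> Crossed H G \<and> y \<in> Crossed H G \<and> approx2 H G x y}"

definition E2_iso_rel where
  "E2_iso_rel H G = {(x, y). x \<in> Crossed H G \<and> y \<in> Crossed H G \<and> E2_isomorphic H G x y}"

end

theory Submission imports Defs begin

lemma (in group) inv_cancel_l [simp]: "x \<in> carrier G \<Longrightarrow> y \<in> carrier G \<Longrightarrow> inv x \<otimes> (x \<otimes> y) = y"
  by (simp add: m_assoc [symmetric])
lemma (in group) inv_cancel_r [simp]: "x \<in> carrier G \<Longrightarrow> y \<in> carrier G \<Longrightarrow> x \<otimes> (inv x \<otimes> y) = y"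
  by (simp add: m_assoc [symmetric])

lemma inv_hom:
  assumes h: "\<phi> \<in> hom A B" and b: "bij_betw \<phi> (carrier A) (carrier B)"
    and cl: "\<And>x y. x \<in> carrier A \<Longrightarrow> y \<in> carrier A \<Longrightarrow> x \<otimes>\<^bsub>A\<^esub> y \<in> carrier A"
  shows "inv_into (carrier A) \<phi> \<in> hom B A"
proof -
  have inj: "inj_on \<phi> (carrier A)" and im: "\<phi> ` carrier A = carrier B" using b by (simp_all add: bij_betw_def)
  have c: "\<And>x. x \<in> carrier B \<Longrightarrow> inv_into (carrier A) \<phi> x \<in> carrier A" using im by (metis inv_into_into)
  have e: "\<And>x. x \<in> carrier B \<Longrightarrow> \<phi> (inv_into (carrier A) \<phi> x) = x" using im by (metis f_inv_into_f)
  show ?thesis unfolding hom_def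
  proof (intro CollectI conjI Pi_I ballI)
    fix x assume "x \<in> carrier B" then show "inv_into (carrier A) \<phi> x \<in> carrier A" by (rule c)
  next
    fix x y assume x: "x \<in> carrier B" and y: "y \<in> carrier B"
    show "inv_into (carrier A) \<phi> (x \<otimes>\<^bsub>B\<^esub> y) = inv_into (carrier A) \<phi> x \<otimes>\<^bsub>A\<^esub> inv_into (carrier A) \<phi> y"
    proof (rule inv_into_f_eq[OF inj])
      show "inv_into (carrier A) \<phi> x \<otimes>\<^bsub>A\<^esub> inv_into (carrier A) \<phi> y \<in> carrier A" using c x y cl by simp
      show "\<phi> (inv_into (carrier A) \<phi> x \<otimes>\<^bsub>A\<^esub> inv_into (carrier A) \<phi> y) = x \<otimes>\<^bsub>B\<^esub> y"
        using hom_mult[OF h c[OF x] c[OF y]] e x y by simp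
    qed
  qed
qed

locale two_groups = H: group H + G: group G for H :: "'h monoid" and G :: "'g monoid"

locale crossed = two_groups +
  fixes \<alpha> f assumes cr: "(\<alpha>, f) \<in> Crossed H G"
begin

lemma crD: "\<alpha> \<in> carrier G \<rightarrow>\<^sub>E auto H \<and>
     f \<in> carrier G \<times> carrier G \<rightarrow>\<^sub>E carrier H \<and>
     f (\<one>\<^bsub>G\<^esub>, \<one>\<^bsub>G\<^esub>) = \<one>\<^bsub>H\<^esub> \<and>
     (\<forall>g1\<in>carrier G. \<forall>g2\<in>carrier G. \<forall>h\<in>carrier H.
        \<alpha> g1 (\<alpha> g2 h) = f (g1, g2) \<otimes>\<^bsub>H\<^esub> \<alpha> (g1 \<otimes>\<^bsub>G\<^esub> g2) h \<otimes>\<^bsub>H\<^esub> inv\<^bsub>H\<^esub> f (g1, g2)) \<and>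
     (\<forall>g1\<in>carrier G. \<forall>g2\<in>carrier G. \<forall>g3\<in>carrier G.
        f (g1, g2) \<otimes>\<^bsub>H\<^esub> f (g1 \<otimes>\<^bsub>G\<^esub> g2, g3) = \<alpha> g1 (f (g2, g3)) \<otimes>\<^bsub>H\<^esub> f (g1, g2 \<otimes>\<^bsub>G\<^esub> g3))"
  using cr unfolding Crossed_def mem_Collect_eq case_prod_conv by assumption

lemma alpha_auto: "g \<in> carrier G \<Longrightarrow> \<alpha> g \<in> auto H"
  using crD by (meson PiE_mem)
lemma f_closed [simp]: "g1 \<in> carrier G \<Longrightarrow> g2 \<in> carrier G \<Longrightarrow> f (g1, g2) \<in> carrier H"
  using crD by (meson PiE_mem SigmaI)
lemma f_11: "f (\<one>\<^bsub>G\<^esub>, \<one>\<^bsub>G\<^esub>) = \<one>\<^bsub>H\<^esub>"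
  by (rule crD[THEN conjunct2, THEN conjunct2, THEN conjunct1])

lemma WA: assumes "g1 \<in> carrier G" "g2 \<in> carrier G" "h \<in> carrier H" shows
  "\<alpha> g1 (\<alpha> g2 h) = f (g1, g2) \<otimes>\<^bsub>H\<^esub> \<alpha> (g1 \<otimes>\<^bsub>G\<^esub> g2) h \<otimes>\<^bsub>H\<^esub> inv\<^bsub>H\<^esub> f (g1, g2)"
  by (rule bspec[OF bspec[OF bspec[OF crD[THEN conjunct2, THEN conjunct2, THEN conjunct2, THEN conjunct1] assms(1)] assms(2)] assms(3)])
lemma CC: assumes "g1 \<in> carrier G" "g2 \<in> carrier G" "g3 \<in> carrier G" shows
  "f (g1, g2) \<otimes>\<^bsub>H\<^esub> f (g1 \<otimes>\<^bsub>G\<^esub> g2, g3) = \<alpha> g1 (f (g2, g3)) \<otimes>\<^bsub>H\<^esub> f (g1, g2 \<otimes>\<^bsub>G\<^esub> g3)"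
  by (rule bspec[OF bspec[OF bspec[OF crD[THEN conjunct2, THEN conjunct2, THEN conjunct2, THEN conjunct2] assms(1)] assms(2)] assms(3)])
lemma alpha_hom: "g \<in> carrier G \<Longrightarrow> \<alpha> g \<in> hom H H"
  using alpha_auto unfolding auto_def by (rule IntD1)
lemma alpha_bij: assumes "g \<in> carrier G" shows "bij_betw (\<alpha> g) (carrier H) (carrier H)"
proof -
  have "\<alpha> g \<in> Bij (carrier H)" using alpha_auto[OF assms] unfolding auto_def by (rule IntD2)
  then show ?thesis unfolding Bij_def by simp
qed
lemma alpha_gh: "g \<in> carrier G \<Longrightarrow> group_hom H H (\<alpha> g)"
  by (rule group_hom.intro[OF H.group_axioms H.group_axioms]) (simp add: group_hom_axioms_def alpha_hom)
lemma alpha_closed [simp]: "g \<in> carrier G \<Longrightarrow> h \<in> carrier H \<Longrightarrow> \<alpha> g h \<in> carrier H"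
  by (rule group_hom.hom_closed[OF alpha_gh])
lemma alpha_mult [simp]: "g \<in> carrier G \<Longrightarrow> a \<in> carrier H \<Longrightarrow> b \<in> carrier H \<Longrightarrow> \<alpha> g (a \<otimes>\<^bsub>H\<^esub> b) = \<alpha> g a \<otimes>\<^bsub>H\<^esub> \<alpha> g b"
  by (rule group_hom.hom_mult[OF alpha_gh])
lemma alpha_one [simp]: "g \<in> carrier G \<Longrightarrow> \<alpha> g \<one>\<^bsub>H\<^esub> = \<one>\<^bsub>H\<^esub>"
  by (rule group_hom.hom_one[OF alpha_gh])
lemma alpha_inv [simp]: "g \<in> carrier G \<Longrightarrow> a \<in> carrier H \<Longrightarrow> \<alpha> g (inv\<^bsub>H\<^esub> a) = inv\<^bsub>H\<^esub> (\<alpha> g a)"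
  by (rule group_hom.hom_inv[OF alpha_gh])

lemma alpha_1 [simp]: "h \<in> carrier H \<Longrightarrow> \<alpha> \<one>\<^bsub>G\<^esub> h = h"
proof -
  assume h: "h \<in> carrier H"
  have 1: "\<alpha> \<one>\<^bsub>G\<^esub> (\<alpha> \<one>\<^bsub>G\<^esub> h) = \<alpha> \<one>\<^bsub>G\<^esub> h"
    using WA[of "\<one>\<^bsub>G\<^esub>" "\<one>\<^bsub>G\<^esub>" h] h by (simp add: f_11)
  have "inj_on (\<alpha> \<one>\<^bsub>G\<^esub>) (carrier H)" using alpha_bij[of "\<one>\<^bsub>G\<^esub>"] unfolding bij_betw_def by simp
  from inj_onD[OF this 1] h show ?thesis by simp
qed

lemma f_1g [simp]: "g \<in> carrier G \<Longrightarrow> f (\<one>\<^bsub>G\<^esub>, g) = \<one>\<^bsub>H\<^esub>"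
proof -
  assume g: "g \<in> carrier G"
  have "f (\<one>\<^bsub>G\<^esub>, g) = f (\<one>\<^bsub>G\<^esub>, g) \<otimes>\<^bsub>H\<^esub> f (\<one>\<^bsub>G\<^esub>, g)"
    using CC[of "\<one>\<^bsub>G\<^esub>" "\<one>\<^bsub>G\<^esub>" g] g by (simp add: f_11)
  then show ?thesis using g by simp
qed

lemma f_g1 [simp]: "g \<in> carrier G \<Longrightarrow> f (g, \<one>\<^bsub>G\<^esub>) = \<one>\<^bsub>H\<^esub>"
proof -
  assume g: "g \<in> carrier G"
  have "f (g, \<one>\<^bsub>G\<^esub>) \<otimes>\<^bsub>H\<^esub> f (g, \<one>\<^bsub>G\<^esub>) = f (g, \<one>\<^bsub>G\<^esub>)"
    using CC[of g "\<one>\<^bsub>G\<^esub>" "\<one>\<^bsub>G\<^esub>"] g by (simp add: f_11)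
  then show ?thesis using g by simp
qed

lemma cp_mult [simp]: "(h1, g1) \<otimes>\<^bsub>crossed_product H G \<alpha> f\<^esub> (h2, g2) = (h1 \<otimes>\<^bsub>H\<^esub> \<alpha> g1 h2 \<otimes>\<^bsub>H\<^esub> f (g1, g2), g1 \<otimes>\<^bsub>G\<^esub> g2)"
  by (simp add: crossed_product_def)
lemma cp_carrier [simp]: "carrier (crossed_product H G \<alpha> f) = carrier H \<times> carrier G"
  by (simp add: crossed_product_def)
lemma cp_closed: "p \<in> carrier (crossed_product H G \<alpha> f) \<Longrightarrow> q \<in> carrier (crossed_product H G \<alpha> f)
   \<Longrightarrow> p \<otimes>\<^bsub>crossed_product H G \<alpha> f\<^esub> q \<in> carrier (crossed_product H G \<alpha> f)"
  by (cases p; cases q) simp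

end

locale two_crossed = X: crossed H G \<alpha> f + Y: crossed H G \<alpha>' f'
  for H :: "'h monoid" and G :: "'g monoid" and \<alpha> f \<alpha>' f'
begin

lemma iso_approx:
  assumes m1: "E2_mor H G (\<alpha>,f) (\<alpha>',f') \<eta> \<psi> \<gamma>"
    and m2: "E2_mor H G (\<alpha>',f') (\<alpha>,f) \<eta>' \<psi>' \<gamma>'"
    and ih: "\<And>h. h \<in> carrier H \<Longrightarrow> \<eta>' (\<eta> h) = h \<and> \<eta> (\<eta>' h) = h"
    and ig: "\<And>g. g \<in> carrier G \<Longrightarrow> \<gamma>' (\<gamma> g) = g \<and> \<gamma> (\<gamma>' g) = g"
  shows "approx2 H G (\<alpha>,f) (\<alpha>',f')"
proof -
  have m1': "\<eta> \<in> hom H H \<and> \<psi> \<in> hom (crossed_product H G \<alpha> f) (crossed_product H G \<alpha>' f') \<and> \<gamma> \<in> hom G G \<and>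
     (\<forall>h\<in>carrier H. \<psi> (h, \<one>\<^bsub>G\<^esub>) = (\<eta> h, \<one>\<^bsub>G\<^esub>)) \<and> (\<forall>h\<in>carrier H. \<forall>g\<in>carrier G. snd (\<psi> (h, g)) = \<gamma> g)"
    using m1 unfolding E2_mor_def fst_conv snd_conv .
  have m2': "\<eta>' \<in> hom H H \<and> \<gamma>' \<in> hom G G"
    using m2 unfolding E2_mor_def fst_conv snd_conv by (intro conjI) (elim conjE; assumption)+
  have \<eta>h: "\<eta> \<in> hom H H" using m1' by (rule conjunct1)
  have \<psi>h: "\<psi> \<in> hom (crossed_product H G \<alpha> f) (crossed_product H G \<alpha>' f')" using m1' by (elim conjE)
  have \<gamma>h: "\<gamma> \<in> hom G G" using m1' by (elim conjE)
  have \<psi>1: "\<And>h. h\<in>carrier H \<Longrightarrow> \<psi> (h, \<one>\<^bsub>G\<^esub>) = (\<eta> h, \<one>\<^bsub>G\<^esub>)" using m1' by (elim conjE) (erule bspec)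
  have \<psi>s: "\<And>h g. h\<in>carrier H \<Longrightarrow> g\<in>carrier G \<Longrightarrow> snd (\<psi> (h,g)) = \<gamma> g"
  proof -
    fix h g assume "h\<in>carrier H" "g\<in>carrier G"
    have "\<forall>h\<in>carrier H. \<forall>g\<in>carrier G. snd (\<psi> (h, g)) = \<gamma> g" using m1' by (elim conjE)
    then show "snd (\<psi> (h,g)) = \<gamma> g" using \<open>h\<in>carrier H\<close> \<open>g\<in>carrier G\<close> by simp
  qed
  have \<eta>'h: "\<eta>' \<in> hom H H" using m2' by (rule conjunct1)
  have \<gamma>'h: "\<gamma>' \<in> hom G G" using m2' by (rule conjunct2)
  interpret \<eta>g: group_hom H H \<eta> by (rule group_hom.intro[OF X.H.group_axioms X.H.group_axioms]) (simp add: group_hom_axioms_def \<eta>h)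
  interpret \<eta>'g: group_hom H H \<eta>' by (rule group_hom.intro[OF X.H.group_axioms X.H.group_axioms]) (simp add: group_hom_axioms_def \<eta>'h)
  interpret \<gamma>g: group_hom G G \<gamma> by (rule group_hom.intro[OF X.G.group_axioms X.G.group_axioms]) (simp add: group_hom_axioms_def \<gamma>h)
  interpret \<gamma>'g: group_hom G G \<gamma>' by (rule group_hom.intro[OF X.G.group_axioms X.G.group_axioms]) (simp add: group_hom_axioms_def \<gamma>'h)
  have \<eta>bij: "bij_betw \<eta> (carrier H) (carrier H)"
    by (rule bij_betw_byWitness[where f'=\<eta>']) (auto simp: ih)
  have \<gamma>bij: "bij_betw \<gamma> (carrier G) (carrier G)"
    by (rule bij_betw_byWitness[where f'=\<gamma>']) (auto simp: ig)
  have inv\<eta>: "\<And>h. h\<in>carrier H \<Longrightarrow> inv_into (carrier H) \<eta> h = \<eta>' h"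
    by (rule inv_into_f_eq[OF bij_betw_imp_inj_on[OF \<eta>bij]]) (simp_all add: ih)
  have inv\<gamma>: "\<And>g. g\<in>carrier G \<Longrightarrow> inv_into (carrier G) \<gamma> g = \<gamma>' g"
    by (rule inv_into_f_eq[OF bij_betw_imp_inj_on[OF \<gamma>bij]]) (simp_all add: ig)
  have \<psi>c: "\<And>p. p \<in> carrier H \<times> carrier G \<Longrightarrow> \<psi> p \<in> carrier H \<times> carrier G"
    using hom_in_carrier[OF \<psi>h] by simp
  have \<psi>m: "\<And>p q. p \<in> carrier H \<times> carrier G \<Longrightarrow> q \<in> carrier H \<times> carrier G \<Longrightarrow>
      \<psi> (p \<otimes>\<^bsub>crossed_product H G \<alpha> f\<^esub> q) = \<psi> p \<otimes>\<^bsub>crossed_product H G \<alpha>' f'\<^esub> \<psi> q"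
    using \<psi>h by (simp add: hom_mult)
  define c where "c g = fst (\<psi> (\<one>\<^bsub>H\<^esub>, g))" for g
  have cc: "\<And>g. g\<in>carrier G \<Longrightarrow> c g \<in> carrier H"
    unfolding c_def using \<psi>c by (metis X.H.one_closed SigmaI mem_Sigma_iff prod.collapse)
  have cone: "c \<one>\<^bsub>G\<^esub> = \<one>\<^bsub>H\<^esub>" using \<psi>1[of "\<one>\<^bsub>H\<^esub>"] by (simp add: c_def)
  have \<psi>1g: "\<And>g. g\<in>carrier G \<Longrightarrow> \<psi> (\<one>\<^bsub>H\<^esub>, g) = (c g, \<gamma> g)"
    by (rule prod_eqI) (simp_all add: c_def \<psi>s)
  have \<psi>form: "\<And>h g. h\<in>carrier H \<Longrightarrow> g\<in>carrier G \<Longrightarrow> \<psi> (h, g) = (\<eta> h \<otimes>\<^bsub>H\<^esub> c g, \<gamma> g)"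
  proof -
    fix h g assume h: "h\<in>carrier H" and g: "g\<in>carrier G"
    have "\<psi> (h, g) = \<psi> ((h, \<one>\<^bsub>G\<^esub>) \<otimes>\<^bsub>crossed_product H G \<alpha> f\<^esub> (\<one>\<^bsub>H\<^esub>, g))" using h g by simp
    also have "\<dots> = \<psi> (h, \<one>\<^bsub>G\<^esub>) \<otimes>\<^bsub>crossed_product H G \<alpha>' f'\<^esub> \<psi> (\<one>\<^bsub>H\<^esub>, g)"
      by (rule \<psi>m) (simp_all add: h g)
    also have "\<dots> = (\<eta> h \<otimes>\<^bsub>H\<^esub> c g, \<gamma> g)" using h g cc by (simp add: \<psi>1 \<psi>1g)
    finally show "\<psi> (h, g) = (\<eta> h \<otimes>\<^bsub>H\<^esub> c g, \<gamma> g)" .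
  qed
  have key\<alpha>: "\<And>g k. g\<in>carrier G \<Longrightarrow> k\<in>carrier H \<Longrightarrow> c g \<otimes>\<^bsub>H\<^esub> \<alpha>' (\<gamma> g) (\<eta> k) = \<eta> (\<alpha> g k) \<otimes>\<^bsub>H\<^esub> c g"
  proof -
    fix g k assume g: "g\<in>carrier G" and k: "k\<in>carrier H"
    have "\<psi> ((\<one>\<^bsub>H\<^esub>, g) \<otimes>\<^bsub>crossed_product H G \<alpha> f\<^esub> (k, \<one>\<^bsub>G\<^esub>)) = \<psi> (\<one>\<^bsub>H\<^esub>, g) \<otimes>\<^bsub>crossed_product H G \<alpha>' f'\<^esub> \<psi> (k, \<one>\<^bsub>G\<^esub>)"
      by (rule \<psi>m) (simp_all add: g k)
    then have "(\<eta> (\<alpha> g k) \<otimes>\<^bsub>H\<^esub> c g, \<gamma> g) = (c g \<otimes>\<^bsub>H\<^esub> \<alpha>' (\<gamma> g) (\<eta> k), \<gamma> g)"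
      using g k cc by (simp add: \<psi>form \<psi>1 \<psi>1g cone)
    then show "c g \<otimes>\<^bsub>H\<^esub> \<alpha>' (\<gamma> g) (\<eta> k) = \<eta> (\<alpha> g k) \<otimes>\<^bsub>H\<^esub> c g" by simp
  qed
  have keyf: "\<And>g1 g2. g1\<in>carrier G \<Longrightarrow> g2\<in>carrier G \<Longrightarrow>
      c g1 \<otimes>\<^bsub>H\<^esub> \<alpha>' (\<gamma> g1) (c g2) \<otimes>\<^bsub>H\<^esub> f' (\<gamma> g1, \<gamma> g2) = \<eta> (f (g1, g2)) \<otimes>\<^bsub>H\<^esub> c (g1 \<otimes>\<^bsub>G\<^esub> g2)"
  proof -
    fix g1 g2 assume g1: "g1\<in>carrier G" and g2: "g2\<in>carrier G"
    have "\<psi> ((\<one>\<^bsub>H\<^esub>, g1) \<otimes>\<^bsub>crossed_product H G \<alpha> f\<^esub> (\<one>\<^bsub>H\<^esub>, g2)) = \<psi> (\<one>\<^bsub>H\<^esub>, g1) \<otimes>\<^bsub>crossed_product H G \<alpha>' f'\<^esub> \<psi> (\<one>\<^bsub>H\<^esub>, g2)"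
      by (rule \<psi>m) (simp_all add: g1 g2)
    then have "(\<eta> (f (g1, g2)) \<otimes>\<^bsub>H\<^esub> c (g1 \<otimes>\<^bsub>G\<^esub> g2), \<gamma> (g1 \<otimes>\<^bsub>G\<^esub> g2)) = (c g1 \<otimes>\<^bsub>H\<^esub> \<alpha>' (\<gamma> g1) (c g2) \<otimes>\<^bsub>H\<^esub> f' (\<gamma> g1, \<gamma> g2), \<gamma> g1 \<otimes>\<^bsub>G\<^esub> \<gamma> g2)"
      using g1 g2 cc by (simp add: \<psi>form \<psi>1g)
    then show "c g1 \<otimes>\<^bsub>H\<^esub> \<alpha>' (\<gamma> g1) (c g2) \<otimes>\<^bsub>H\<^esub> f' (\<gamma> g1, \<gamma> g2) = \<eta> (f (g1, g2)) \<otimes>\<^bsub>H\<^esub> c (g1 \<otimes>\<^bsub>G\<^esub> g2)" by simp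
  qed
  define t where "t g = inv\<^bsub>H\<^esub> (\<eta>' (c (\<gamma>' g)))" for g
  show ?thesis
    unfolding approx2_def case_prod_conv
  proof (intro exI[of _ \<eta>] exI[of _ \<gamma>] exI[of _ t] conjI ballI)
    show "\<eta> \<in> iso H H" by (rule isoI[OF \<eta>h \<eta>bij])
    show "\<gamma> \<in> iso G G" by (rule isoI[OF \<gamma>h \<gamma>bij])
    show "t \<in> carrier G \<rightarrow> carrier H" unfolding t_def using cc by simp
  next
    fix g' h assume g': "g' \<in> carrier G" and h: "h \<in> carrier H"
    define g where "g = \<gamma>' g'"
    define k where "k = \<eta>' h"
    have g: "g \<in> carrier G" and gg: "\<gamma> g = g'" using g' ig by (simp_all add: g_def)
    have k: "k \<in> carrier H" and kk: "\<eta> k = h" using h ih by (simp_all add: k_def)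
    define C where "C = c g"
    have C: "C \<in> carrier H" using cc g by (simp add: C_def)
    have key: "C \<otimes>\<^bsub>H\<^esub> \<alpha>' g' h = \<eta> (\<alpha> g k) \<otimes>\<^bsub>H\<^esub> C" using key\<alpha>[OF g k] by (simp add: C_def gg kk)
    have eq: "\<eta> (\<alpha> g k) = C \<otimes>\<^bsub>H\<^esub> \<alpha>' g' h \<otimes>\<^bsub>H\<^esub> inv\<^bsub>H\<^esub> C"
      using key C g k h g' by (simp add: X.H.inv_solve_right)
    have "\<eta> (t g' \<otimes>\<^bsub>H\<^esub> \<alpha> (inv_into (carrier G) \<gamma> g') (inv_into (carrier H) \<eta> h) \<otimes>\<^bsub>H\<^esub> inv\<^bsub>H\<^esub> t g')
        = inv\<^bsub>H\<^esub> C \<otimes>\<^bsub>H\<^esub> \<eta> (\<alpha> g k) \<otimes>\<^bsub>H\<^esub> C"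
      using C g k ih by (simp add: inv\<gamma> inv\<eta> g' h t_def C_def g_def[symmetric] k_def[symmetric])
    also have "\<dots> = \<alpha>' g' h" using C g' h by (simp add: eq X.H.m_assoc)
    finally show "\<alpha>' g' h = \<eta> (t g' \<otimes>\<^bsub>H\<^esub> \<alpha> (inv_into (carrier G) \<gamma> g') (inv_into (carrier H) \<eta> h) \<otimes>\<^bsub>H\<^esub> inv\<^bsub>H\<^esub> t g')" by simp
  next
    fix g1' g2' assume g1': "g1' \<in> carrier G" and g2': "g2' \<in> carrier G"
    define g1 where "g1 = \<gamma>' g1'"
    define g2 where "g2 = \<gamma>' g2'"
    have g1: "g1 \<in> carrier G" and gg1: "\<gamma> g1 = g1'" using g1' ig by (simp_all add: g1_def)
    have g2: "g2 \<in> carrier G" and gg2: "\<gamma> g2 = g2'" using g2' ig by (simp_all add: g2_def)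
    have g12: "\<gamma>' (g1' \<otimes>\<^bsub>G\<^esub> g2') = g1 \<otimes>\<^bsub>G\<^esub> g2" using g1' g2' by (simp add: g1_def g2_def)
    define c1 where "c1 = c g1"
    define c2 where "c2 = c g2"
    define c12 where "c12 = c (g1 \<otimes>\<^bsub>G\<^esub> g2)"
    have c1: "c1 \<in> carrier H" and c2: "c2 \<in> carrier H" and c12: "c12 \<in> carrier H"
      using cc g1 g2 by (simp_all add: c1_def c2_def c12_def)
    define A where "A = \<alpha>' g1' c2"
    have A: "A \<in> carrier H" using g1' c2 by (simp add: A_def)
    have k1: "c1 \<otimes>\<^bsub>H\<^esub> A = \<eta> (\<alpha> g1 (\<eta>' c2)) \<otimes>\<^bsub>H\<^esub> c1"
      using key\<alpha>[OF g1, of "\<eta>' c2"] c2 ih by (simp add: c1_def A_def gg1)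
    have E: "\<eta> (\<alpha> g1 (\<eta>' c2)) = c1 \<otimes>\<^bsub>H\<^esub> A \<otimes>\<^bsub>H\<^esub> inv\<^bsub>H\<^esub> c1"
      using k1 c1 A g1 c2 by (simp add: X.H.inv_solve_right)
    have k2: "c1 \<otimes>\<^bsub>H\<^esub> A \<otimes>\<^bsub>H\<^esub> f' (g1', g2') = \<eta> (f (g1, g2)) \<otimes>\<^bsub>H\<^esub> c12"
      using keyf[OF g1 g2] by (simp add: c1_def c2_def c12_def A_def gg1 gg2)
    have F: "\<eta> (f (g1, g2)) = c1 \<otimes>\<^bsub>H\<^esub> A \<otimes>\<^bsub>H\<^esub> f' (g1', g2') \<otimes>\<^bsub>H\<^esub> inv\<^bsub>H\<^esub> c12"
      using k2 c1 A c12 g1 g2 g1' g2' by (simp add: X.H.inv_solve_right)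
    have "\<eta> (t g1' \<otimes>\<^bsub>H\<^esub> \<alpha> (inv_into (carrier G) \<gamma> g1') (t g2') \<otimes>\<^bsub>H\<^esub> f (inv_into (carrier G) \<gamma> g1', inv_into (carrier G) \<gamma> g2') \<otimes>\<^bsub>H\<^esub> inv\<^bsub>H\<^esub> t (g1' \<otimes>\<^bsub>G\<^esub> g2'))
       = inv\<^bsub>H\<^esub> c1 \<otimes>\<^bsub>H\<^esub> inv\<^bsub>H\<^esub> (\<eta> (\<alpha> g1 (\<eta>' c2))) \<otimes>\<^bsub>H\<^esub> \<eta> (f (g1, g2)) \<otimes>\<^bsub>H\<^esub> c12"
      using c1 c2 c12 g1 g2 ih by (simp add: inv\<gamma> g1' g2' t_def g12 c1_def c2_def c12_def g1_def[symmetric] g2_def[symmetric])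
    also have "\<dots> = f' (g1', g2')"
      using c1 c2 c12 A g1' g2' by (simp add: E F X.H.m_assoc X.H.inv_mult_group)
    finally show "f' (g1', g2') = \<eta> (t g1' \<otimes>\<^bsub>H\<^esub> \<alpha> (inv_into (carrier G) \<gamma> g1') (t g2') \<otimes>\<^bsub>H\<^esub> f (inv_into (carrier G) \<gamma> g1', inv_into (carrier G) \<gamma> g2') \<otimes>\<^bsub>H\<^esub> inv\<^bsub>H\<^esub> t (g1' \<otimes>\<^bsub>G\<^esub> g2'))" by simp
  qed
qed


lemma mor_bij_iso:
  assumes m: "E2_mor H G (\<alpha>,f) (\<alpha>',f') \<eta> \<psi> \<gamma>"
    and b\<eta>: "bij_betw \<eta> (carrier H) (carrier H)"
    and b\<gamma>: "bij_betw \<gamma> (carrier G) (carrier G)"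
    and b\<psi>: "bij_betw \<psi> (carrier H \<times> carrier G) (carrier H \<times> carrier G)"
  shows "E2_isomorphic H G (\<alpha>,f) (\<alpha>',f')"
proof -
  have m': "\<eta> \<in> hom H H \<and> \<psi> \<in> hom (crossed_product H G \<alpha> f) (crossed_product H G \<alpha>' f') \<and> \<gamma> \<in> hom G G \<and>
     (\<forall>h\<in>carrier H. \<psi> (h, \<one>\<^bsub>G\<^esub>) = (\<eta> h, \<one>\<^bsub>G\<^esub>)) \<and> (\<forall>h\<in>carrier H. \<forall>g\<in>carrier G. snd (\<psi> (h, g)) = \<gamma> g)"
    using m unfolding E2_mor_def fst_conv snd_conv .
  have \<eta>h: "\<eta> \<in> hom H H" using m' by (rule conjunct1)
  have \<psi>h: "\<psi> \<in> hom (crossed_product H G \<alpha> f) (crossed_product H G \<alpha>' f')" using m' by (elim conjE)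
  have \<gamma>h: "\<gamma> \<in> hom G G" using m' by (elim conjE)
  have \<psi>1: "\<And>h. h\<in>carrier H \<Longrightarrow> \<psi> (h, \<one>\<^bsub>G\<^esub>) = (\<eta> h, \<one>\<^bsub>G\<^esub>)" using m' by (elim conjE) (erule bspec)
  have \<psi>s: "\<And>h g. h\<in>carrier H \<Longrightarrow> g\<in>carrier G \<Longrightarrow> snd (\<psi> (h,g)) = \<gamma> g"
  proof -
    fix h g assume "h\<in>carrier H" "g\<in>carrier G"
    have "\<forall>h\<in>carrier H. \<forall>g\<in>carrier G. snd (\<psi> (h, g)) = \<gamma> g" using m' by (elim conjE)
    then show "snd (\<psi> (h,g)) = \<gamma> g" using \<open>h\<in>carrier H\<close> \<open>g\<in>carrier G\<close> by simp
  qed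
  define \<eta>' where "\<eta>' = inv_into (carrier H) \<eta>"
  define \<gamma>' where "\<gamma>' = inv_into (carrier G) \<gamma>"
  define \<psi>' where "\<psi>' = inv_into (carrier H \<times> carrier G) \<psi>"
  have i\<eta>: "inj_on \<eta> (carrier H)" and s\<eta>: "\<eta> ` carrier H = carrier H" using b\<eta> by (simp_all add: bij_betw_def)
  have i\<gamma>: "inj_on \<gamma> (carrier G)" and s\<gamma>: "\<gamma> ` carrier G = carrier G" using b\<gamma> by (simp_all add: bij_betw_def)
  have i\<psi>: "inj_on \<psi> (carrier H \<times> carrier G)" and s\<psi>: "\<psi> ` (carrier H \<times> carrier G) = carrier H \<times> carrier G" using b\<psi> by (simp_all add: bij_betw_def)
  have \<eta>'h: "\<eta>' \<in> hom H H" unfolding \<eta>'_def by (rule inv_hom[OF \<eta>h b\<eta>]) simp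
  have \<gamma>'h: "\<gamma>' \<in> hom G G" unfolding \<gamma>'_def by (rule inv_hom[OF \<gamma>h b\<gamma>]) simp
  have \<psi>'h: "\<psi>' \<in> hom (crossed_product H G \<alpha>' f') (crossed_product H G \<alpha> f)" unfolding \<psi>'_def
    using inv_hom[OF \<psi>h, unfolded X.cp_carrier Y.cp_carrier, OF b\<psi>] X.cp_closed by simp
  have \<eta>'c: "\<And>h. h \<in> carrier H \<Longrightarrow> \<eta>' h \<in> carrier H" unfolding \<eta>'_def using s\<eta> by (metis inv_into_into)
  have \<gamma>'c: "\<And>h. h \<in> carrier G \<Longrightarrow> \<gamma>' h \<in> carrier G" unfolding \<gamma>'_def using s\<gamma> by (metis inv_into_into)
  have \<psi>'c: "\<And>h. h \<in> carrier H \<times> carrier G \<Longrightarrow> \<psi>' h \<in> carrier H \<times> carrier G" unfolding \<psi>'_def using s\<psi> by (metis inv_into_into)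
  have \<eta>'e: "\<And>h. h \<in> carrier H \<Longrightarrow> \<eta> (\<eta>' h) = h" unfolding \<eta>'_def using s\<eta> by (metis f_inv_into_f)
  have \<gamma>'e: "\<And>h. h \<in> carrier G \<Longrightarrow> \<gamma> (\<gamma>' h) = h" unfolding \<gamma>'_def using s\<gamma> by (metis f_inv_into_f)
  have \<psi>'e: "\<And>h. h \<in> carrier H \<times> carrier G \<Longrightarrow> \<psi> (\<psi>' h) = h" unfolding \<psi>'_def using s\<psi> by (metis f_inv_into_f)
  have \<eta>'f: "\<And>h. h \<in> carrier H \<Longrightarrow> \<eta>' (\<eta> h) = h" unfolding \<eta>'_def using i\<eta> by (metis inv_into_f_f)
  have \<gamma>'f: "\<And>h. h \<in> carrier G \<Longrightarrow> \<gamma>' (\<gamma> h) = h" unfolding \<gamma>'_def using i\<gamma> by (metis inv_into_f_f)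
  have \<psi>'f: "\<And>h. h \<in> carrier H \<times> carrier G \<Longrightarrow> \<psi>' (\<psi> h) = h" unfolding \<psi>'_def using i\<psi> by (metis inv_into_f_f)
  have m2: "E2_mor H G (\<alpha>',f') (\<alpha>,f) \<eta>' \<psi>' \<gamma>'"
    unfolding E2_mor_def fst_conv snd_conv
  proof (intro conjI ballI \<eta>'h \<psi>'h \<gamma>'h)
    fix h assume h: "h \<in> carrier H"
    show "\<psi>' (h, \<one>\<^bsub>G\<^esub>) = (\<eta>' h, \<one>\<^bsub>G\<^esub>)" unfolding \<psi>'_def
      by (rule inv_into_f_eq[OF i\<psi>]) (simp_all add: h \<eta>'c \<psi>1 \<eta>'e)
  next
    fix h g assume h: "h \<in> carrier H" and g: "g \<in> carrier G"
    obtain a b where ab: "\<psi>' (h, g) = (a, b)" by (cases "\<psi>' (h, g)")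
    have abc: "a \<in> carrier H" "b \<in> carrier G" using \<psi>'c[of "(h,g)"] h g ab by simp_all
    have "\<psi> (a, b) = (h, g)" using \<psi>'e[of "(h,g)"] h g ab by simp
    then have "\<gamma> b = g" using \<psi>s[OF abc] by simp
    then show "snd (\<psi>' (h, g)) = \<gamma>' g" using ab \<gamma>'f abc by auto
  qed
  show ?thesis unfolding E2_isomorphic_def
    apply (rule exI[of _ \<eta>], rule exI[of _ \<psi>], rule exI[of _ \<gamma>], rule exI[of _ \<eta>'], rule exI[of _ \<psi>'], rule exI[of _ \<gamma>'])
    using m m2 \<eta>'e \<eta>'f \<gamma>'e \<gamma>'f \<psi>'e \<psi>'f by simp
qed

lemma approx_iso:
  assumes a: "approx2 H G (\<alpha>,f) (\<alpha>',f')"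
  shows "E2_isomorphic H G (\<alpha>,f) (\<alpha>',f')"
proof -
  obtain \<eta> \<gamma> t where \<eta>i: "\<eta> \<in> iso H H" and \<gamma>i: "\<gamma> \<in> iso G G" and tc: "t \<in> carrier G \<rightarrow> carrier H"
    and a\<alpha>: "\<forall>g\<in>carrier G. \<forall>h\<in>carrier H.
             \<alpha>' g h = \<eta> (t g \<otimes>\<^bsub>H\<^esub> \<alpha> (inv_into (carrier G) \<gamma> g) (inv_into (carrier H) \<eta> h) \<otimes>\<^bsub>H\<^esub> inv\<^bsub>H\<^esub> t g)"
    and af: "\<forall>g1\<in>carrier G. \<forall>g2\<in>carrier G.
             f' (g1, g2) = \<eta> (t g1 \<otimes>\<^bsub>H\<^esub> \<alpha> (inv_into (carrier G) \<gamma> g1) (t g2)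
                 \<otimes>\<^bsub>H\<^esub> f (inv_into (carrier G) \<gamma> g1, inv_into (carrier G) \<gamma> g2)
                 \<otimes>\<^bsub>H\<^esub> inv\<^bsub>H\<^esub> t (g1 \<otimes>\<^bsub>G\<^esub> g2))"
    using a unfolding approx2_def case_prod_conv by blast
  have \<eta>h: "\<eta> \<in> hom H H" and b\<eta>: "bij_betw \<eta> (carrier H) (carrier H)" using \<eta>i by (simp_all add: iso_def)
  have \<gamma>h: "\<gamma> \<in> hom G G" and b\<gamma>: "bij_betw \<gamma> (carrier G) (carrier G)" using \<gamma>i by (simp_all add: iso_def)
  interpret \<eta>g: group_hom H H \<eta> by (rule group_hom.intro[OF X.H.group_axioms X.H.group_axioms]) (simp add: group_hom_axioms_def \<eta>h)
  interpret \<gamma>g: group_hom G G \<gamma> by (rule group_hom.intro[OF X.G.group_axioms X.G.group_axioms]) (simp add: group_hom_axioms_def \<gamma>h)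
  have i\<eta>: "inj_on \<eta> (carrier H)" and s\<eta>: "\<eta> ` carrier H = carrier H" using b\<eta> by (simp_all add: bij_betw_def)
  have i\<gamma>: "inj_on \<gamma> (carrier G)" and s\<gamma>: "\<gamma> ` carrier G = carrier G" using b\<gamma> by (simp_all add: bij_betw_def)
  define \<eta>' where "\<eta>' = inv_into (carrier H) \<eta>"
  define \<gamma>' where "\<gamma>' = inv_into (carrier G) \<gamma>"
  have \<eta>'c: "\<And>h. h \<in> carrier H \<Longrightarrow> \<eta>' h \<in> carrier H" unfolding \<eta>'_def using s\<eta> by (metis inv_into_into)
  have \<gamma>'c: "\<And>h. h \<in> carrier G \<Longrightarrow> \<gamma>' h \<in> carrier G" unfolding \<gamma>'_def using s\<gamma> by (metis inv_into_into)
  have \<eta>'e: "\<And>h. h \<in> carrier H \<Longrightarrow> \<eta> (\<eta>' h) = h" unfolding \<eta>'_def using s\<eta> by (metis f_inv_into_f)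
  have \<gamma>'e: "\<And>h. h \<in> carrier G \<Longrightarrow> \<gamma> (\<gamma>' h) = h" unfolding \<gamma>'_def using s\<gamma> by (metis f_inv_into_f)
  have \<eta>'f: "\<And>h. h \<in> carrier H \<Longrightarrow> \<eta>' (\<eta> h) = h" unfolding \<eta>'_def using i\<eta> by (metis inv_into_f_f)
  have \<gamma>'f: "\<And>h. h \<in> carrier G \<Longrightarrow> \<gamma>' (\<gamma> h) = h" unfolding \<gamma>'_def using i\<gamma> by (metis inv_into_f_f)
  have tcl: "\<And>g. g \<in> carrier G \<Longrightarrow> t g \<in> carrier H" using tc by (simp add: Pi_iff)
  have \<alpha>\<gamma>: "\<And>g x. g \<in> carrier G \<Longrightarrow> x \<in> carrier H \<Longrightarrow> \<alpha>' (\<gamma> g) (\<eta> x) = \<eta> (t (\<gamma> g) \<otimes>\<^bsub>H\<^esub> \<alpha> g x \<otimes>\<^bsub>H\<^esub> inv\<^bsub>H\<^esub> t (\<gamma> g))"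
  proof -
    fix g x assume g: "g \<in> carrier G" and x: "x \<in> carrier H"
    have "\<alpha>' (\<gamma> g) (\<eta> x) = \<eta> (t (\<gamma> g) \<otimes>\<^bsub>H\<^esub> \<alpha> (\<gamma>' (\<gamma> g)) (\<eta>' (\<eta> x)) \<otimes>\<^bsub>H\<^esub> inv\<^bsub>H\<^esub> t (\<gamma> g))"
      using a\<alpha> g x unfolding \<eta>'_def \<gamma>'_def by simp
    then show "\<alpha>' (\<gamma> g) (\<eta> x) = \<eta> (t (\<gamma> g) \<otimes>\<^bsub>H\<^esub> \<alpha> g x \<otimes>\<^bsub>H\<^esub> inv\<^bsub>H\<^esub> t (\<gamma> g))" using g x \<eta>'f \<gamma>'f by simp
  qed
  have f\<gamma>: "\<And>g1 g2. g1 \<in> carrier G \<Longrightarrow> g2 \<in> carrier G \<Longrightarrow> f' (\<gamma> g1, \<gamma> g2) =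
     \<eta> (t (\<gamma> g1) \<otimes>\<^bsub>H\<^esub> \<alpha> g1 (t (\<gamma> g2)) \<otimes>\<^bsub>H\<^esub> f (g1, g2) \<otimes>\<^bsub>H\<^esub> inv\<^bsub>H\<^esub> t (\<gamma> (g1 \<otimes>\<^bsub>G\<^esub> g2)))"
  proof -
    fix g1 g2 assume g1: "g1 \<in> carrier G" and g2: "g2 \<in> carrier G"
    have "f' (\<gamma> g1, \<gamma> g2) = \<eta> (t (\<gamma> g1) \<otimes>\<^bsub>H\<^esub> \<alpha> (\<gamma>' (\<gamma> g1)) (t (\<gamma> g2)) \<otimes>\<^bsub>H\<^esub> f (\<gamma>' (\<gamma> g1), \<gamma>' (\<gamma> g2)) \<otimes>\<^bsub>H\<^esub> inv\<^bsub>H\<^esub> t (\<gamma> g1 \<otimes>\<^bsub>G\<^esub> \<gamma> g2))"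
      using af g1 g2 unfolding \<gamma>'_def by simp
    then show "f' (\<gamma> g1, \<gamma> g2) = \<eta> (t (\<gamma> g1) \<otimes>\<^bsub>H\<^esub> \<alpha> g1 (t (\<gamma> g2)) \<otimes>\<^bsub>H\<^esub> f (g1, g2) \<otimes>\<^bsub>H\<^esub> inv\<^bsub>H\<^esub> t (\<gamma> (g1 \<otimes>\<^bsub>G\<^esub> g2)))"
      using g1 g2 \<gamma>'f by simp
  qed
  have t1: "t \<one>\<^bsub>G\<^esub> = \<one>\<^bsub>H\<^esub>"
  proof -
    have "\<one>\<^bsub>H\<^esub> = \<eta> (t \<one>\<^bsub>G\<^esub>)"
      using f\<gamma>[of "\<one>\<^bsub>G\<^esub>" "\<one>\<^bsub>G\<^esub>"] tcl[of "\<one>\<^bsub>G\<^esub>"] by (simp add: X.f_11 Y.f_11 X.H.m_assoc)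
    then have "\<eta> (t \<one>\<^bsub>G\<^esub>) = \<eta> \<one>\<^bsub>H\<^esub>" by (metis \<eta>g.hom_one)
    then show ?thesis using inj_onD[OF i\<eta>] tcl[of "\<one>\<^bsub>G\<^esub>"] by simp
  qed
  define \<psi> where "\<psi> p = (\<eta> (fst p \<otimes>\<^bsub>H\<^esub> inv\<^bsub>H\<^esub> t (\<gamma> (snd p))), \<gamma> (snd p))" for p
  define \<psi>' where "\<psi>' p = (\<eta>' (fst p) \<otimes>\<^bsub>H\<^esub> t (snd p), \<gamma>' (snd p))" for p
  have \<psi>h: "\<psi> \<in> hom (crossed_product H G \<alpha> f) (crossed_product H G \<alpha>' f')"
    unfolding hom_def
  proof (intro CollectI conjI Pi_I ballI)
    fix p assume "p \<in> carrier (crossed_product H G \<alpha> f)"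
    then show "\<psi> p \<in> carrier (crossed_product H G \<alpha>' f')" using tcl by (auto simp: \<psi>_def)
  next
    fix p q assume p: "p \<in> carrier (crossed_product H G \<alpha> f)" and q: "q \<in> carrier (crossed_product H G \<alpha> f)"
    obtain h1 g1 where p': "p = (h1, g1)" and h1: "h1 \<in> carrier H" and g1: "g1 \<in> carrier G" using p by auto
    obtain h2 g2 where q': "q = (h2, g2)" and h2: "h2 \<in> carrier H" and g2: "g2 \<in> carrier G" using q by auto
    define t1 where "t1 = t (\<gamma> g1)"
    define t2 where "t2 = t (\<gamma> g2)"
    define t12 where "t12 = t (\<gamma> (g1 \<otimes>\<^bsub>G\<^esub> g2))"
    have tt: "t1 \<in> carrier H" "t2 \<in> carrier H" "t12 \<in> carrier H" using tcl g1 g2 by (simp_all add: t1_def t2_def t12_def)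
    have "fst (\<psi> p \<otimes>\<^bsub>crossed_product H G \<alpha>' f'\<^esub> \<psi> q) =
        \<eta> (h1 \<otimes>\<^bsub>H\<^esub> inv\<^bsub>H\<^esub> t1) \<otimes>\<^bsub>H\<^esub> \<alpha>' (\<gamma> g1) (\<eta> (h2 \<otimes>\<^bsub>H\<^esub> inv\<^bsub>H\<^esub> t2)) \<otimes>\<^bsub>H\<^esub> f' (\<gamma> g1, \<gamma> g2)"
      by (simp add: p' q' \<psi>_def t1_def t2_def)
    also have "\<dots> = \<eta> (h1 \<otimes>\<^bsub>H\<^esub> inv\<^bsub>H\<^esub> t1) \<otimes>\<^bsub>H\<^esub> \<eta> (t1 \<otimes>\<^bsub>H\<^esub> \<alpha> g1 (h2 \<otimes>\<^bsub>H\<^esub> inv\<^bsub>H\<^esub> t2) \<otimes>\<^bsub>H\<^esub> inv\<^bsub>H\<^esub> t1)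
        \<otimes>\<^bsub>H\<^esub> \<eta> (t1 \<otimes>\<^bsub>H\<^esub> \<alpha> g1 t2 \<otimes>\<^bsub>H\<^esub> f (g1, g2) \<otimes>\<^bsub>H\<^esub> inv\<^bsub>H\<^esub> t12)"
      using \<alpha>\<gamma>[OF g1, of "h2 \<otimes>\<^bsub>H\<^esub> inv\<^bsub>H\<^esub> t2"] f\<gamma>[OF g1 g2] tt h2 by (simp add: t1_def t2_def t12_def)
    also have "\<dots> = \<eta> ((h1 \<otimes>\<^bsub>H\<^esub> inv\<^bsub>H\<^esub> t1) \<otimes>\<^bsub>H\<^esub> (t1 \<otimes>\<^bsub>H\<^esub> \<alpha> g1 (h2 \<otimes>\<^bsub>H\<^esub> inv\<^bsub>H\<^esub> t2) \<otimes>\<^bsub>H\<^esub> inv\<^bsub>H\<^esub> t1)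
        \<otimes>\<^bsub>H\<^esub> (t1 \<otimes>\<^bsub>H\<^esub> \<alpha> g1 t2 \<otimes>\<^bsub>H\<^esub> f (g1, g2) \<otimes>\<^bsub>H\<^esub> inv\<^bsub>H\<^esub> t12))"
      using tt h1 h2 g1 g2 by simp
    also have "(h1 \<otimes>\<^bsub>H\<^esub> inv\<^bsub>H\<^esub> t1) \<otimes>\<^bsub>H\<^esub> (t1 \<otimes>\<^bsub>H\<^esub> \<alpha> g1 (h2 \<otimes>\<^bsub>H\<^esub> inv\<^bsub>H\<^esub> t2) \<otimes>\<^bsub>H\<^esub> inv\<^bsub>H\<^esub> t1)
        \<otimes>\<^bsub>H\<^esub> (t1 \<otimes>\<^bsub>H\<^esub> \<alpha> g1 t2 \<otimes>\<^bsub>H\<^esub> f (g1, g2) \<otimes>\<^bsub>H\<^esub> inv\<^bsub>H\<^esub> t12) = h1 \<otimes>\<^bsub>H\<^esub> \<alpha> g1 h2 \<otimes>\<^bsub>H\<^esub> f (g1, g2) \<otimes>\<^bsub>H\<^esub> inv\<^bsub>H\<^esub> t12"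
      using tt h1 h2 g1 g2 by (simp add: X.H.m_assoc)
    finally have e1: "fst (\<psi> p \<otimes>\<^bsub>crossed_product H G \<alpha>' f'\<^esub> \<psi> q) = \<eta> (h1 \<otimes>\<^bsub>H\<^esub> \<alpha> g1 h2 \<otimes>\<^bsub>H\<^esub> f (g1, g2) \<otimes>\<^bsub>H\<^esub> inv\<^bsub>H\<^esub> t12)" .
    have e2: "fst (\<psi> (p \<otimes>\<^bsub>crossed_product H G \<alpha> f\<^esub> q)) = \<eta> (h1 \<otimes>\<^bsub>H\<^esub> \<alpha> g1 h2 \<otimes>\<^bsub>H\<^esub> f (g1, g2) \<otimes>\<^bsub>H\<^esub> inv\<^bsub>H\<^esub> t12)"
      by (simp add: p' q' \<psi>_def t12_def)
    have e3: "snd (\<psi> (p \<otimes>\<^bsub>crossed_product H G \<alpha> f\<^esub> q)) = snd (\<psi> p \<otimes>\<^bsub>crossed_product H G \<alpha>' f'\<^esub> \<psi> q)"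
      using g1 g2 by (simp add: p' q' \<psi>_def)
    show "\<psi> (p \<otimes>\<^bsub>crossed_product H G \<alpha> f\<^esub> q) = \<psi> p \<otimes>\<^bsub>crossed_product H G \<alpha>' f'\<^esub> \<psi> q"
      using e1 e2 e3 by (simp add: prod_eq_iff)
  qed
  have m: "E2_mor H G (\<alpha>,f) (\<alpha>',f') \<eta> \<psi> \<gamma>"
    unfolding E2_mor_def fst_conv snd_conv using \<eta>h \<psi>h \<gamma>h t1 by (simp add: \<psi>_def)
  have b\<psi>: "bij_betw \<psi> (carrier H \<times> carrier G) (carrier H \<times> carrier G)"
  proof (rule bij_betw_byWitness[where f'=\<psi>'])
    show "\<forall>a\<in>carrier H \<times> carrier G. \<psi>' (\<psi> a) = a"
      using tcl by (auto simp: \<psi>_def \<psi>'_def \<eta>'f \<gamma>'f X.H.m_assoc simp del: \<eta>g.hom_mult \<eta>g.hom_inv)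
    show "\<forall>a\<in>carrier H \<times> carrier G. \<psi> (\<psi>' a) = a"
      using tcl \<eta>'c \<gamma>'c by (auto simp: \<psi>_def \<psi>'_def \<eta>'e \<gamma>'e X.H.m_assoc simp del: \<eta>g.hom_mult \<eta>g.hom_inv)
    show "\<psi> ` (carrier H \<times> carrier G) \<subseteq> carrier H \<times> carrier G"
      using tcl by (auto simp: \<psi>_def)
    show "\<psi>' ` (carrier H \<times> carrier G) \<subseteq> carrier H \<times> carrier G"
      using tcl \<eta>'c \<gamma>'c by (auto simp: \<psi>'_def)
  qed
  show ?thesis by (rule mor_bij_iso[OF m b\<eta> b\<gamma> b\<psi>])
qed

lemma iso_approx':
  assumes "E2_isomorphic H G (\<alpha>,f) (\<alpha>',f')"
  shows "approx2 H G (\<alpha>,f) (\<alpha>',f')"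
proof -
  obtain \<eta> \<psi> \<gamma> \<eta>' \<psi>' \<gamma>' where m: "E2_mor H G (\<alpha>,f) (\<alpha>',f') \<eta> \<psi> \<gamma>" "E2_mor H G (\<alpha>',f') (\<alpha>,f) \<eta>' \<psi>' \<gamma>'"
    and i: "\<forall>h\<in>carrier H. \<eta>' (\<eta> h) = h \<and> \<eta> (\<eta>' h) = h" "\<forall>g\<in>carrier G. \<gamma>' (\<gamma> g) = g \<and> \<gamma> (\<gamma>' g) = g"
    using assms unfolding E2_isomorphic_def by blast
  show ?thesis by (rule iso_approx[OF m]) (simp_all add: i)
qed
end


lemma cp_carrier_gen: "carrier (crossed_product H G a b) = carrier H \<times> carrier G"
  by (simp add: crossed_product_def)

lemma E2_mor_comp:
  assumes m1: "E2_mor H G x y \<eta>1 \<psi>1 \<gamma>1" and m2: "E2_mor H G y z \<eta>2 \<psi>2 \<gamma>2"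
  shows "E2_mor H G x z (\<lambda>h. \<eta>2 (\<eta>1 h)) (\<lambda>p. \<psi>2 (\<psi>1 p)) (\<lambda>g. \<gamma>2 (\<gamma>1 g))"
proof -
  have A: "\<eta>1 \<in> hom H H" "\<psi>1 \<in> hom (crossed_product H G (fst x) (snd x)) (crossed_product H G (fst y) (snd y))"
    "\<gamma>1 \<in> hom G G" "\<forall>h\<in>carrier H. \<psi>1 (h, \<one>\<^bsub>G\<^esub>) = (\<eta>1 h, \<one>\<^bsub>G\<^esub>)" "\<forall>h\<in>carrier H. \<forall>g\<in>carrier G. snd (\<psi>1 (h, g)) = \<gamma>1 g"
    using m1 unfolding E2_mor_def by simp_all
  have B: "\<eta>2 \<in> hom H H" "\<psi>2 \<in> hom (crossed_product H G (fst y) (snd y)) (crossed_product H G (fst z) (snd z))"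
    "\<gamma>2 \<in> hom G G" "\<forall>h\<in>carrier H. \<psi>2 (h, \<one>\<^bsub>G\<^esub>) = (\<eta>2 h, \<one>\<^bsub>G\<^esub>)" "\<forall>h\<in>carrier H. \<forall>g\<in>carrier G. snd (\<psi>2 (h, g)) = \<gamma>2 g"
    using m2 unfolding E2_mor_def by simp_all
  have hc: "\<And>a b c \<phi>1 \<phi>2. \<phi>1 \<in> hom a b \<Longrightarrow> \<phi>2 \<in> hom b c \<Longrightarrow> (\<lambda>p. \<phi>2 (\<phi>1 p)) \<in> hom a c"
  proof -
    fix a b c \<phi>1 \<phi>2 assume h1: "\<phi>1 \<in> hom a b" and h2: "\<phi>2 \<in> hom b c"
    show "(\<lambda>p. \<phi>2 (\<phi>1 p)) \<in> hom a c" unfolding hom_def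
    proof (intro CollectI conjI Pi_I ballI)
      fix p assume "p \<in> carrier a" then show "\<phi>2 (\<phi>1 p) \<in> carrier c"
        using hom_in_carrier[OF h2 hom_in_carrier[OF h1]] by blast
    next
      fix p q assume "p \<in> carrier a" "q \<in> carrier a"
      then show "\<phi>2 (\<phi>1 (p \<otimes>\<^bsub>a\<^esub> q)) = \<phi>2 (\<phi>1 p) \<otimes>\<^bsub>c\<^esub> \<phi>2 (\<phi>1 q)"
        using hom_mult[OF h1] hom_mult[OF h2] hom_in_carrier[OF h1] by simp
    qed
  qed
  show ?thesis unfolding E2_mor_def
  proof (intro conjI ballI)
    show "(\<lambda>h. \<eta>2 (\<eta>1 h)) \<in> hom H H" by (rule hc[OF A(1) B(1)])
    show "(\<lambda>p. \<psi>2 (\<psi>1 p)) \<in> hom (crossed_product H G (fst x) (snd x)) (crossed_product H G (fst z) (snd z))"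
      by (rule hc[OF A(2) B(2)])
    show "(\<lambda>g. \<gamma>2 (\<gamma>1 g)) \<in> hom G G" by (rule hc[OF A(3) B(3)])
  next
    fix h assume h: "h \<in> carrier H"
    show "\<psi>2 (\<psi>1 (h, \<one>\<^bsub>G\<^esub>)) = (\<eta>2 (\<eta>1 h), \<one>\<^bsub>G\<^esub>)" using A(4) B(4) h hom_in_carrier[OF A(1) h] by simp
  next
    fix h g assume h: "h \<in> carrier H" and g: "g \<in> carrier G"
    have pc: "\<psi>1 (h, g) \<in> carrier H \<times> carrier G"
      using hom_in_carrier[OF A(2), of "(h,g)"] h g by (simp add: cp_carrier_gen)
    obtain a b where ab: "\<psi>1 (h, g) = (a, b)" by (cases "\<psi>1 (h, g)")
    have "b = \<gamma>1 g" using A(5) h g ab by (metis snd_conv)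
    moreover have "a \<in> carrier H" "b \<in> carrier G" using pc ab by auto
    ultimately show "snd (\<psi>2 (\<psi>1 (h, g))) = \<gamma>2 (\<gamma>1 g)" using B(5) ab by simp
  qed
qed

lemma E2_iso_refl: "E2_isomorphic H G x x"
proof -
  have "E2_mor H G x x (\<lambda>h. h) (\<lambda>p. p) (\<lambda>g. g)" unfolding E2_mor_def hom_def by simp
  then show ?thesis unfolding E2_isomorphic_def by blast
qed

lemma E2_iso_sym: "E2_isomorphic H G x y \<Longrightarrow> E2_isomorphic H G y x"
  unfolding E2_isomorphic_def by blast

lemma E2_iso_trans:
  assumes xy: "E2_isomorphic H G x y" and yz: "E2_isomorphic H G y z"
  shows "E2_isomorphic H G x z"
proof -
  obtain \<eta>1 \<psi>1 \<gamma>1 \<eta>1' \<psi>1' \<gamma>1' where a: "E2_mor H G x y \<eta>1 \<psi>1 \<gamma>1" "E2_mor H G y x \<eta>1' \<psi>1' \<gamma>1'"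
    "\<forall>h\<in>carrier H. \<eta>1' (\<eta>1 h) = h \<and> \<eta>1 (\<eta>1' h) = h" "\<forall>g\<in>carrier G. \<gamma>1' (\<gamma>1 g) = g \<and> \<gamma>1 (\<gamma>1' g) = g"
    "\<forall>p\<in>carrier H \<times> carrier G. \<psi>1' (\<psi>1 p) = p \<and> \<psi>1 (\<psi>1' p) = p"
    using xy unfolding E2_isomorphic_def by blast
  obtain \<eta>2 \<psi>2 \<gamma>2 \<eta>2' \<psi>2' \<gamma>2' where b: "E2_mor H G y z \<eta>2 \<psi>2 \<gamma>2" "E2_mor H G z y \<eta>2' \<psi>2' \<gamma>2'"
    "\<forall>h\<in>carrier H. \<eta>2' (\<eta>2 h) = h \<and> \<eta>2 (\<eta>2' h) = h" "\<forall>g\<in>carrier G. \<gamma>2' (\<gamma>2 g) = g \<and> \<gamma>2 (\<gamma>2' g) = g"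
    "\<forall>p\<in>carrier H \<times> carrier G. \<psi>2' (\<psi>2 p) = p \<and> \<psi>2 (\<psi>2' p) = p"
    using yz unfolding E2_isomorphic_def by blast
  have h\<eta>: "\<eta>1 \<in> hom H H" "\<eta>2' \<in> hom H H" using a(1) b(2) unfolding E2_mor_def by simp_all
  have h\<gamma>: "\<gamma>1 \<in> hom G G" "\<gamma>2' \<in> hom G G" using a(1) b(2) unfolding E2_mor_def by simp_all
  have h\<psi>: "\<psi>1 \<in> hom (crossed_product H G (fst x) (snd x)) (crossed_product H G (fst y) (snd y))"
     "\<psi>2' \<in> hom (crossed_product H G (fst z) (snd z)) (crossed_product H G (fst y) (snd y))"
    using a(1) b(2) unfolding E2_mor_def by simp_all
  have c\<eta>: "\<And>h. h \<in> carrier H \<Longrightarrow> \<eta>1 h \<in> carrier H" "\<And>h. h \<in> carrier H \<Longrightarrow> \<eta>2' h \<in> carrier H"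
    using hom_in_carrier[OF h\<eta>(1)] hom_in_carrier[OF h\<eta>(2)] by auto
  have c\<gamma>: "\<And>h. h \<in> carrier G \<Longrightarrow> \<gamma>1 h \<in> carrier G" "\<And>h. h \<in> carrier G \<Longrightarrow> \<gamma>2' h \<in> carrier G"
    using hom_in_carrier[OF h\<gamma>(1)] hom_in_carrier[OF h\<gamma>(2)] by auto
  have c\<psi>: "\<And>h. h \<in> carrier H \<times> carrier G \<Longrightarrow> \<psi>1 h \<in> carrier H \<times> carrier G" "\<And>h. h \<in> carrier H \<times> carrier G \<Longrightarrow> \<psi>2' h \<in> carrier H \<times> carrier G"
    using hom_in_carrier[OF h\<psi>(1)] hom_in_carrier[OF h\<psi>(2)] by (auto simp: cp_carrier_gen)
  have \<psi>i: "\<forall>p\<in>carrier H \<times> carrier G. \<psi>1' (\<psi>2' (\<psi>2 (\<psi>1 p))) = p \<and> \<psi>2 (\<psi>1 (\<psi>1' (\<psi>2' p))) = p"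
  proof
    fix p assume p: "p \<in> carrier H \<times> carrier G"
    have q1: "\<psi>2' (\<psi>2 (\<psi>1 p)) = \<psi>1 p" using bspec[OF b(5) c\<psi>(1)[OF p]] by (rule conjunct1)
    have q2: "\<psi>1' (\<psi>1 p) = p" using bspec[OF a(5) p] by (rule conjunct1)
    have q3: "\<psi>1 (\<psi>1' (\<psi>2' p)) = \<psi>2' p" using bspec[OF a(5) c\<psi>(2)[OF p]] by (rule conjunct2)
    have q4: "\<psi>2 (\<psi>2' p) = p" using bspec[OF b(5) p] by (rule conjunct2)
    show "\<psi>1' (\<psi>2' (\<psi>2 (\<psi>1 p))) = p \<and> \<psi>2 (\<psi>1 (\<psi>1' (\<psi>2' p))) = p" using q1 q2 q3 q4 by simp
  qed
  show ?thesis unfolding E2_isomorphic_def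
    apply (rule exI[of _ "\<lambda>h. \<eta>2 (\<eta>1 h)"], rule exI[of _ "\<lambda>p. \<psi>2 (\<psi>1 p)"], rule exI[of _ "\<lambda>g. \<gamma>2 (\<gamma>1 g)"])
    apply (rule exI[of _ "\<lambda>h. \<eta>1' (\<eta>2' h)"], rule exI[of _ "\<lambda>p. \<psi>1' (\<psi>2' p)"], rule exI[of _ "\<lambda>g. \<gamma>1' (\<gamma>2' g)"])
    using E2_mor_comp[OF a(1) b(1)] E2_mor_comp[OF b(2) a(2)] a(3-4) b(3-4) c\<eta> c\<gamma> \<psi>i by simp
qed

theorem theorem3p6:
  fixes H :: "'h monoid" and G :: "'g monoid"
  assumes "group H" and "group G"
  shows "equiv (Crossed H G) (approx2_rel H G)
    \<and> (\<forall>x\<in>Crossed H G. \<forall>y\<in>Crossed H G. approx2 H G x y \<longleftrightarrow> E2_isomorphic H G x y)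
    \<and> (\<exists>\<Phi>. bij_betw \<Phi> (Crossed H G // E2_iso_rel H G) (Crossed H G // approx2_rel H G))"
proof -
  have iff: "\<forall>x\<in>Crossed H G. \<forall>y\<in>Crossed H G. approx2 H G x y \<longleftrightarrow> E2_isomorphic H G x y"
  proof (intro ballI)
    fix x y assume x: "x \<in> Crossed H G" and y: "y \<in> Crossed H G"
    obtain \<alpha> f where xx: "x = (\<alpha>, f)" by (cases x)
    obtain \<alpha>' f' where yy: "y = (\<alpha>', f')" by (cases y)
    interpret two_crossed H G \<alpha> f \<alpha>' f'
      using assms x y xx yy
      by (simp add: two_crossed_def crossed_def crossed_axioms_def two_groups_def)
    show "approx2 H G x y \<longleftrightarrow> E2_isomorphic H G x y"
      using approx_iso iso_approx' xx yy by blast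
  qed
  have releq: "approx2_rel H G = E2_iso_rel H G"
    using iff unfolding approx2_rel_def E2_iso_rel_def by auto
  have eqv: "equiv (Crossed H G) (E2_iso_rel H G)"
  proof (rule equivI)
    show "E2_iso_rel H G \<subseteq> Crossed H G \<times> Crossed H G" unfolding E2_iso_rel_def by auto
    show "refl_on (Crossed H G) (E2_iso_rel H G)" unfolding E2_iso_rel_def refl_on_def
      using E2_iso_refl by auto
    show "sym (E2_iso_rel H G)" unfolding E2_iso_rel_def sym_def using E2_iso_sym by auto
    show "trans (E2_iso_rel H G)" unfolding E2_iso_rel_def trans_def using E2_iso_trans by blast
  qed
  have "bij_betw id (Crossed H G // E2_iso_rel H G) (Crossed H G // approx2_rel H G)"
    by (simp add: releq)
  then have ex: "\<exists>\<Phi>. bij_betw \<Phi> (Crossed H G // E2_iso_rel H G) (Crossed H G // approx2_rel H G)" by (rule exI[where x=id])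
  have eqv2: "equiv (Crossed H G) (approx2_rel H G)" using eqv by (simp add: releq)
  show ?thesis by (intro conjI eqv2 iff ex)
qed

end
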